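(* Let $a,d\in\mathbb{N}$ and $n,m\ge 1$. Consider the Pólya–Eggenberger urn with ball transition matrix $\begin{pmatrix}-a&0\\0&-d\end{pmatrix}$ started with $a n$ white and $d m$ black balls, and let $Y_{an,dm}$ be the number of white balls remaining when the process stops. Then for $0\le k\le n$, \[ \mathbb{P}\{Y_{an,dm}=ak\}=\sum_{\ell=1}^{m}(-1)^{\ell-1}\frac{\binom{m}{\ell}\binom{k-1+\frac{\ell d}{a}}{k}}{\binom{n+\frac{\ell d}{a}}{n}}=\sum_{\ell=k}^{n}(-1)^{\ell-k}\frac{\binom{n}{\ell}\binom{\ell}{k}}{\binom{m+\frac{\ell a}{d}}{m}}. \] Moreover, the normalized random variable $\hat Y_{an,dm}=Y_{an,dm}/a$ satisfies, for every integer $s\ge 1$, \[ \mathbb{E}\big(\hat Y_{an,dm}^{\underline{s}}\big)=\frac{n^{\underline{s}}}{\binom{m+\frac{as}{d}}{m}},\qquad \mathbb{E}\big(\hat Y_{an,dm}^{s}\big)=\sum_{j=0}^{s}{s\brace j}\frac{n^{\underline{j}}}{\binom{m+\frac{aj}{d}}{m}}. \]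
   Context: The urn: at each step one ball is drawn uniformly at random among all balls present; if it is white, the number of white balls decreases by $a$; if it is black, the number of black balls decreases by $d$ (so from $a n'$ white and $d m'$ black balls, a white ball is drawn with probability $an'/(an'+dm')$). The process stops as soon as the urn contains no white or no black balls; $Y_{an,dm}$ is the number of white balls at that time (so it is $0$ if whites are exhausted first). For real $x$ and integer $k\ge 0$, $x^{\underline{k}}=x(x-1)\cdots(x-k+1)$ denotes the falling factorial and $\binom{x}{k}=x^{\underline{k}}/k!$. ${s\brace j}$ denotes the Stirling numbers of the second kind. *)

theory Defs
  imports "HOL-Probability.Probability" "HOL-Combinatorics.Stirling"
begin

definition falling_fact :: "real \<Rightarrow> nat \<Rightarrow> real" where
  "falling_fact x k = (\<Prod>i<k. x - real i)"

text \<open>Distribution of the number of white balls remaining when the urn with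
  ball transition matrix diag(-a,-d), started with a*n white and d*m black balls,
  stops (no white or no black balls left).\<close>
fun urn :: "nat \<Rightarrow> nat \<Rightarrow> nat \<Rightarrow> nat \<Rightarrow> nat pmf" where
  "urn a d 0 m = return_pmf 0"
| "urn a d (Suc n) 0 = return_pmf (a * Suc n)"
| "urn a d (Suc n) (Suc m) =
     bind_pmf (bernoulli_pmf (real (a * Suc n) / real (a * Suc n + d * Suc m)))
       (\<lambda>white. if white then urn a d n (Suc m) else urn a d (Suc n) m)"

end

theory Submission
  imports Defs
begin


lemma set_urn_aux: "\<forall>m. set_pmf (urn a d n m) \<subseteq> {..a*n}"
proof (induction n)
  case 0 then show ?case by (auto elim: urn.elims)
next
  case (Suc n)
  show ?case
  proof
    fix m show "set_pmf (urn a d (Suc n) m) \<subseteq> {..a*Suc n}"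
    proof (induction m)
      case 0 then show ?case by simp
    next
      case (Suc m)
      have "set_pmf (urn a d (Suc n) (Suc m)) \<subseteq> set_pmf (urn a d n (Suc m)) \<union> set_pmf (urn a d (Suc n) m)"
        by (auto split: if_splits)
      moreover have "{..a*n} \<subseteq> {..a*Suc n}" by auto
      moreover have "set_pmf (urn a d n (Suc m)) \<subseteq> {..a*n}" using \<open>\<forall>m. set_pmf (urn a d n m) \<subseteq> {..a*n}\<close> by (rule spec)
      ultimately show ?case using Suc.IH by (meson Un_least order_trans)
    qed
  qed
qed

lemma set_urn: "set_pmf (urn a d n m) \<subseteq> {..a*n}"
  using set_urn_aux by blast

lemma finite_urn: "finite (set_pmf (urn a d n m))"
  by (rule finite_subset[OF set_urn]) simp

lemma E_sum:
  assumes "n \<le> N"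
  shows "measure_pmf.expectation (urn a d n m) g = (\<Sum>y\<le>a*N. pmf (urn a d n m) y * g y)"
proof -
  have "set_pmf (urn a d n m) \<subseteq> {..a*N}" using set_urn[of a d n m] assms
    by (meson atMost_subset_iff mult_le_mono2 order_trans)
  then have "measure_pmf.expectation (urn a d n m) g = (\<Sum>y\<le>a*N. g y * pmf (urn a d n m) y)"
    by (intro integral_measure_pmf_real) auto
  then show ?thesis by (simp add: mult.commute)
qed

lemma urn_step:
  fixes a d n m :: nat and g :: "nat \<Rightarrow> real"
  assumes "a \<ge> 1"
  defines "p \<equiv> real (a * Suc n) / real (a * Suc n + d * Suc m)"
  shows "measure_pmf.expectation (urn a d (Suc n) (Suc m)) g =
     p * measure_pmf.expectation (urn a d n (Suc m)) g + (1 - p) * measure_pmf.expectation (urn a d (Suc n) m) g"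
proof -
  have "a * Suc n + d * Suc m > 0" using assms by simp
  then have pos: "real (a * Suc n + d * Suc m) > 0" by (simp only: of_nat_0_less_iff)
  have p: "0 \<le> p" "p \<le> 1" unfolding p_def using pos by (simp_all only: divide_le_eq_1 of_nat_le_iff) simp_all
  have pm: "pmf (urn a d (Suc n) (Suc m)) y = p * pmf (urn a d n (Suc m)) y + (1 - p) * pmf (urn a d (Suc n) m) y" for y
    unfolding urn.simps(3)[of a d n m] p_def[symmetric] pmf_bind using p by simp
  show ?thesis
    by (simp only: E_sum[of "Suc n" "Suc n"] E_sum[of n "Suc n"] le_SucI order_refl pm)
       (unfold sum_distrib_left sum.distrib[symmetric], rule sum.cong, simp_all add: algebra_simps)

qed

lemma pmf_eq_E: "pmf M x = measure_pmf.expectation M (\<lambda>y. if y = x then 1 else 0)"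
  by (subst integral_measure_pmf_real[of "{x}"]) (auto split: if_splits)

lemma rec_unique:
  fixes F H :: "nat \<Rightarrow> nat \<Rightarrow> real"
  assumes "\<And>m. F 0 m = H 0 m" "\<And>n. F (Suc n) 0 = H (Suc n) 0"
    "\<And>n m. F (Suc n) (Suc m) = p n m * F n (Suc m) + (1 - p n m) * F (Suc n) m"
    "\<And>n m. H (Suc n) (Suc m) = p n m * H n (Suc m) + (1 - p n m) * H (Suc n) m"
  shows "F n m = H n m"
proof (induction n arbitrary: m)
  case 0 then show ?case using assms(1) by simp
next
  case (Suc n)
  note outer = Suc.IH
  show ?case
  proof (induction m)
    case 0 then show ?case using assms(2) by simp
  next
    case (Suc m)
    have "F (Suc n) (Suc m) = p n m * F n (Suc m) + (1 - p n m) * F (Suc n) m" by (rule assms(3))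
    also have "\<dots> = p n m * H n (Suc m) + (1 - p n m) * H (Suc n) m" by (simp only: outer Suc.IH)
    also have "\<dots> = H (Suc n) (Suc m)" by (rule assms(4)[symmetric])
    finally show ?case .
  qed
qed


lemma gch_poch: "(real m + x) gchoose m = pochhammer (x+1) m / fact m"
  by (subst gbinomial_pochhammer') (simp add: algebra_simps)

lemma gch_pos: "x \<ge> 0 \<Longrightarrow> (real m + x) gchoose m > 0"
  unfolding gch_poch by (intro divide_pos_pos pochhammer_pos) auto

lemma gch_Suc: "(real (Suc m) + x) gchoose (Suc m) = (real (Suc m) + x) / real (Suc m) * ((real m + x) gchoose m)"
  unfolding gch_poch by (simp add: pochhammer_Suc field_simps)

lemma gch_0: "(real m + 0) gchoose m = 1"
  using binomial_gbinomial[of m m, where 'a=real] by simp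

lemma alt_sum: "(\<Sum>l=k..N. (-1::real)^(l-k) * (real (N choose l) * real (l choose k))) = (if k = N then 1 else 0)"
proof (cases "k \<le> N")
  case False then show ?thesis by simp
next
  case True
  have "(\<Sum>l=k..N. (-1::real)^(l-k) * (real (N choose l) * real (l choose k)))
      = (\<Sum>i=0..N-k. (-1::real)^i * (real (N choose (i+k)) * real ((i+k) choose k)))"
    using sum.shift_bounds_cl_nat_ivl[of "\<lambda>l. (-1::real)^(l-k) * (real (N choose l) * real (l choose k))" 0 k "N-k"] True
    by simp
  also have "\<dots> = real (N choose k) * (\<Sum>i\<le>N-k. (-1::real)^i * real ((N-k) choose i))"
    unfolding sum_distrib_left atMost_atLeast0
    by (rule sum.cong) (use True in \<open>auto simp: choose_mult[of k "_+k" N] of_nat_mult[symmetric] simp del: of_nat_mult\<close>)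
  also have "\<dots> = (if k = N then 1 else 0)"
    using choose_alternating_sum[of "N-k", where 'a=real] True by (cases "N - k = 0") auto
  finally show ?thesis .
qed

lemma alg:
  fixes a d N M x l Cn Cn' Bm Bm' c :: real
  assumes N: "N > 0" and M: "M > 0" and a: "a > 0" and d: "d > 0" and B: "Bm > 0" and x: "x = l*a/d" and l: "l \<ge> 0"
    and C: "Cn*N = Cn'*(N-l)" and B': "Bm' = (M+x)/M*Bm"
  shows "c*Cn'/Bm' = (a*N/(a*N+d*M))*(c*Cn/Bm') + (1 - a*N/(a*N+d*M))*(c*Cn'/Bm)"
proof -
  have Cn: "Cn = Cn'*(N-l)/N" using C N by (simp add: field_simps)
  have "l*a/d \<ge> 0" using l a d by simp
  then have Mx: "M + l*a/d > 0" using M by linarith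
  define E where "E = M*d + a*l"
  define D where "D = a*N+d*M"
  have E: "E > 0" using M d a l unfolding E_def by (simp add: add_pos_nonneg)
  have D: "D > 0" using a N d M unfolding D_def by (simp add: add_pos_pos)
  have e1: "(M+l*a/d)/M*Bm = E*Bm/(M*d)" using M d unfolding E_def by (simp add: field_simps)
  have e2: "1 - a*N/D = d*M/D" using D unfolding D_def by (simp add: field_simps)
  have EB: "E*Bm > 0" "M*d > 0" "N > 0" using E B M d N by auto
  have l1: "c*Cn'/(E*Bm/(M*d)) = c*Cn'*M*d/(E*Bm)" using EB by (simp add: field_simps)
  define X where "X = c*Cn'*(N-l)"
  have r0: "c*(Cn'*(N-l)/N) = X/N" unfolding X_def by simp
  have r1: "(a*N/D)*((X/N)/(E*Bm/(M*d))) = X*M*d*a/(D*(E*Bm))"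
    using EB D by (simp add: field_simps)
  have r2: "(d*M/D)*(c*Cn'/Bm) = c*Cn'*M*d*E/(D*(E*Bm))"
    using EB D B E by (simp add: field_simps)
  have r4: "X*M*d*a + c*Cn'*M*d*E = (c*Cn'*M*d)*D" unfolding X_def D_def E_def by (simp add: algebra_simps)
  have r5: "(c*Cn'*M*d)*D/(D*(E*Bm)) = c*Cn'*M*d/(E*Bm)" using D by simp
  have "c*Cn'/((M+l*a/d)/M*Bm) = (a*N/(a*N+d*M))*(c*(Cn'*(N-l)/N)/((M+l*a/d)/M*Bm)) + (1 - a*N/(a*N+d*M))*(c*Cn'/Bm)"
    unfolding D_def[symmetric] e1 e2 l1 r0 r1 r2 add_divide_distrib[symmetric] r4 r5 ..
  then show ?thesis unfolding Cn B' x .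
qed

lemma sum_Suc_zero: "f (Suc n) = 0 \<Longrightarrow> sum f {k..Suc n} = sum f {k..n}"
  by (cases "k \<le> Suc n") (auto simp: atLeastAtMostSuc_conv)

lemma Cn_id: "l \<le> Suc n \<Longrightarrow> real (n choose l) * real (Suc n) = real (Suc n choose l) * (real (Suc n) - real l)"
proof -
  assume "l \<le> Suc n"
  have "(Suc n - l) * (Suc n choose l) = Suc n * (n choose l)" using binomial_absorb_comp[of "Suc n" l] by simp
  then have "real (Suc n - l) * real (Suc n choose l) = real (Suc n) * real (n choose l)"
    by (metis of_nat_mult)
  then show ?thesis using \<open>l \<le> Suc n\<close> by (simp add: of_nat_diff algebra_simps)
qed

lemma urn_step':
  fixes a d n m :: nat and g :: "nat \<Rightarrow> real"
  assumes "a \<ge> 1"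
  shows "measure_pmf.expectation (urn a d (Suc n) (Suc m)) g =
     (real a * real (Suc n) / (real a * real (Suc n) + real d * real (Suc m))) * measure_pmf.expectation (urn a d n (Suc m)) g
   + (1 - real a * real (Suc n) / (real a * real (Suc n) + real d * real (Suc m))) * measure_pmf.expectation (urn a d (Suc n) m) g"
  using urn_step[OF assms, of d n m g] by (simp only: of_nat_mult of_nat_add)

lemma F2:
  fixes a d n m k :: nat
  assumes "a \<ge> 1" "d \<ge> 1"
  shows "pmf (urn a d n m) (a*k) = (\<Sum>l=k..n. (-1)^(l-k) * (real (n choose l) * real (l choose k))
           / ((real m + real l * real a / real d) gchoose m))"
proof (rule rec_unique[where F = "\<lambda>n m. pmf (urn a d n m) (a*k)" and
    p = "\<lambda>n m. real a * real (Suc n) / (real a * real (Suc n) + real d * real (Suc m))"])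
  fix m show "pmf (urn a d 0 m) (a*k) = (\<Sum>l=k..0. (-1)^(l-k) * (real (0 choose l) * real (l choose k))
           / ((real m + real l * real a / real d) gchoose m))"
    using assms gch_0[of m] by (cases k) (auto simp: indicator_def)
next
  fix n show "pmf (urn a d (Suc n) 0) (a*k) = (\<Sum>l=k..Suc n. (-1)^(l-k) * (real (Suc n choose l) * real (l choose k))
           / ((real 0 + real l * real a / real d) gchoose 0))"
  proof -
    have eq: "(a + a*n = a*k) = (k = Suc n)" "(a*k = a + a*n) = (k = Suc n)" using assms by (metis mult_Suc_right mult_left_cancel not_one_le_zero)+
    have "pmf (urn a d (Suc n) 0) (a*k) = (if k = Suc n then 1 else 0)" using assms by (auto simp: indicator_def eq)
    also have "\<dots> = (\<Sum>l=k..Suc n. (-1)^(l-k) * (real (Suc n choose l) * real (l choose k))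
           / ((real 0 + real l * real a / real d) gchoose 0))"
      by (simp only: gbinomial_0 div_by_1 alt_sum)
    finally show ?thesis .
  qed
next
  fix n m
  show "pmf (urn a d (Suc n) (Suc m)) (a*k) = real a * real (Suc n) / (real a * real (Suc n) + real d * real (Suc m)) * pmf (urn a d n (Suc m)) (a*k)
     + (1 - real a * real (Suc n) / (real a * real (Suc n) + real d * real (Suc m))) * pmf (urn a d (Suc n) m) (a*k)"
    unfolding pmf_eq_E by (rule urn_step'[OF assms(1)])
next
  fix n m
  let ?p = "real a * real (Suc n) / (real a * real (Suc n) + real d * real (Suc m))"
  let ?t = "\<lambda>n m l. (-1::real)^(l-k) * (real (n choose l) * real (l choose k))
           / ((real m + real l * real a / real d) gchoose m)"
  have ext: "(\<Sum>l=k..n. ?t n (Suc m) l) = (\<Sum>l=k..Suc n. ?t n (Suc m) l)"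
    by (rule sum_Suc_zero[symmetric]) simp
  have "?t (Suc n) (Suc m) l = ?p * ?t n (Suc m) l + (1 - ?p) * ?t (Suc n) m l" if l: "l \<in> {k..Suc n}" for l
  proof -
    have "(-1::real)^(l-k) * real (l choose k) * real (Suc n choose l) / ((real (Suc m) + real l * real a / real d) gchoose (Suc m))
      = ?p * ((-1::real)^(l-k) * real (l choose k) * real (n choose l) / ((real (Suc m) + real l * real a / real d) gchoose (Suc m)))
       + (1 - ?p) * ((-1::real)^(l-k) * real (l choose k) * real (Suc n choose l) / ((real m + real l * real a / real d) gchoose m))"
      apply (rule alg[where x = "real l * real a / real d" and l = "real l"])
      subgoal by simp
      subgoal by simp
      subgoal using assms by simp
      subgoal using assms by simp
      subgoal by (rule gch_pos) simp
      subgoal by (rule refl)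
      subgoal by simp
      subgoal using l by (intro Cn_id) simp
      subgoal by (rule gch_Suc)
      done
    then show ?thesis by (simp add: mult_ac)
  qed
  then show "(\<Sum>l=k..Suc n. ?t (Suc n) (Suc m) l) = ?p * (\<Sum>l=k..n. ?t n (Suc m) l) + (1 - ?p) * (\<Sum>l=k..Suc n. ?t (Suc n) m l)"
    unfolding ext sum_distrib_left sum.distrib[symmetric] by (rule sum.cong[OF refl])
qed



lemma ff_Suc_left: "falling_fact x (Suc s) = x * falling_fact (x - 1) s"
  unfolding falling_fact_def prod.lessThan_Suc_shift by (simp add: algebra_simps)

lemma ff_Suc_right: "falling_fact x (Suc s) = falling_fact x s * (x - real s)"
  unfolding falling_fact_def by simp

lemma ff_0 [simp]: "falling_fact x 0 = 1"
  unfolding falling_fact_def by simp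

lemma ff_zero: "s \<ge> 1 \<Longrightarrow> falling_fact 0 s = 0"
  by (cases s) (simp_all add: ff_Suc_left)

lemma ff_id: "falling_fact (real n) s * real (Suc n) = falling_fact (real (Suc n)) s * (real (Suc n) - real s)"
  using ff_Suc_left[of "real (Suc n)" s] ff_Suc_right[of "real (Suc n)" s] by (simp add: mult.commute)

lemma moment_ff:
  fixes a d n m s :: nat
  assumes "a \<ge> 1" "d \<ge> 1"
  shows "measure_pmf.expectation (urn a d n m) (\<lambda>y. falling_fact (real y / real a) s) =
        falling_fact (real n) s / ((real m + real a * real s / real d) gchoose m)"
proof (rule rec_unique[where F = "\<lambda>n m. measure_pmf.expectation (urn a d n m) (\<lambda>y. falling_fact (real y / real a) s)" and
    p = "\<lambda>n m. real a * real (Suc n) / (real a * real (Suc n) + real d * real (Suc m))"])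
  fix m show "measure_pmf.expectation (urn a d 0 m) (\<lambda>y. falling_fact (real y / real a) s) =
        falling_fact (real 0) s / ((real m + real a * real s / real d) gchoose m)"
    using gch_0[of m] by (cases "s = 0") (simp_all add: ff_zero)
next
  fix n show "measure_pmf.expectation (urn a d (Suc n) 0) (\<lambda>y. falling_fact (real y / real a) s) =
        falling_fact (real (Suc n)) s / ((real 0 + real a * real s / real d) gchoose 0)"
  proof -
    have "real a \<noteq> 0" using assms by simp
    then have h: "(real a + real a * real n) / real a = 1 + real n" by (simp add: field_simps)
    show ?thesis using h by simp
  qed
next
  fix n m
  show "measure_pmf.expectation (urn a d (Suc n) (Suc m)) (\<lambda>y. falling_fact (real y / real a) s) =
     real a * real (Suc n) / (real a * real (Suc n) + real d * real (Suc m)) * measure_pmf.expectation (urn a d n (Suc m)) (\<lambda>y. falling_fact (real y / real a) s)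
     + (1 - real a * real (Suc n) / (real a * real (Suc n) + real d * real (Suc m))) * measure_pmf.expectation (urn a d (Suc n) m) (\<lambda>y. falling_fact (real y / real a) s)"
    by (rule urn_step'[OF assms(1)])
next
  fix n m
  have x: "real a * real s / real d = real s * real a / real d" by simp
  show "falling_fact (real (Suc n)) s / ((real (Suc m) + real a * real s / real d) gchoose (Suc m)) =
     real a * real (Suc n) / (real a * real (Suc n) + real d * real (Suc m)) * (falling_fact (real n) s / ((real (Suc m) + real a * real s / real d) gchoose (Suc m)))
     + (1 - real a * real (Suc n) / (real a * real (Suc n) + real d * real (Suc m))) * (falling_fact (real (Suc n)) s / ((real m + real a * real s / real d) gchoose m))"
    unfolding x
    using alg[where x = "real s * real a / real d" and l = "real s" and c = 1 and Cn = "falling_fact (real n) s"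
       and Cn' = "falling_fact (real (Suc n)) s" and N = "real (Suc n)" and M = "real (Suc m)" and a = "real a" and d = "real d"
       and Bm = "(real m + real s * real a / real d) gchoose m" and Bm' = "(real (Suc m) + real s * real a / real d) gchoose (Suc m)"]
    using assms gch_pos[of "real s * real a / real d" m] ff_id[of n s] gch_Suc[of m "real s * real a / real d"]
    by simp
qed



lemma stirling_ff: "x ^ s = (\<Sum>j\<le>s. real (Stirling s j) * falling_fact x j)"
proof (induction s)
  case 0 then show ?case by simp
next
  case (Suc s)
  have xff: "x * falling_fact x j = falling_fact x (Suc j) + real j * falling_fact x j" for j
    by (simp add: ff_Suc_right algebra_simps)
  have "x ^ Suc s = (\<Sum>j\<le>s. real (Stirling s j) * falling_fact x (Suc j))
      + (\<Sum>j\<le>s. real j * real (Stirling s j) * falling_fact x j)"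
    unfolding power_Suc Suc.IH sum_distrib_left sum.distrib[symmetric]
    by (rule sum.cong) (simp_all add: ff_Suc_right algebra_simps)
  also have "(\<Sum>j\<le>s. real j * real (Stirling s j) * falling_fact x j)
      = (\<Sum>i\<le>s. real (Suc i) * real (Stirling s (Suc i)) * falling_fact x (Suc i))"
  proof -
    have "(\<Sum>j\<le>Suc s. real j * real (Stirling s j) * falling_fact x j) = (\<Sum>j\<le>s. real j * real (Stirling s j) * falling_fact x j)"
      by (simp add: sum.atMost_Suc)
    moreover have "(\<Sum>j\<le>Suc s. real j * real (Stirling s j) * falling_fact x j) = (\<Sum>i\<le>s. real (Suc i) * real (Stirling s (Suc i)) * falling_fact x (Suc i))"
      by (subst sum.atMost_Suc_shift) simp
    ultimately show ?thesis by simp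
  qed
  also have "(\<Sum>j\<le>s. real (Stirling s j) * falling_fact x (Suc j)) + \<dots>
      = (\<Sum>i\<le>s. real (Stirling (Suc s) (Suc i)) * falling_fact x (Suc i))"
    unfolding sum.distrib[symmetric] by (rule sum.cong) (simp_all add: algebra_simps)
  also have "\<dots> = (\<Sum>j\<le>Suc s. real (Stirling (Suc s) j) * falling_fact x j)"
    by (subst sum.atMost_Suc_shift) simp
  finally show ?case .
qed

lemma moment_pow:
  fixes a d n m s :: nat
  assumes "a \<ge> 1" "d \<ge> 1"
  shows "measure_pmf.expectation (urn a d n m) (\<lambda>y. (real y / real a) ^ s) =
        (\<Sum>j = 0..s. real (Stirling s j) * falling_fact (real n) j
           / ((real m + real a * real j / real d) gchoose m))"
proof -
  have int: "integrable (measure_pmf (urn a d n m)) f" for f :: "nat \<Rightarrow> real"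
    by (rule integrable_measure_pmf_finite[OF finite_urn])
  have "measure_pmf.expectation (urn a d n m) (\<lambda>y. (real y / real a) ^ s)
     = measure_pmf.expectation (urn a d n m) (\<lambda>y. \<Sum>j\<le>s. real (Stirling s j) * falling_fact (real y / real a) j)"
    by (simp only: stirling_ff)
  also have "\<dots> = (\<Sum>j\<le>s. measure_pmf.expectation (urn a d n m) (\<lambda>y. real (Stirling s j) * falling_fact (real y / real a) j))"
    by (rule Bochner_Integration.integral_sum) (rule int)
  also have "\<dots> = (\<Sum>j\<le>s. real (Stirling s j) * measure_pmf.expectation (urn a d n m) (\<lambda>y. falling_fact (real y / real a) j))"
    by simp
  also have "\<dots> = (\<Sum>j = 0..s. real (Stirling s j) * falling_fact (real n) j
           / ((real m + real a * real j / real d) gchoose m))"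
    unfolding atLeast0AtMost by (rule sum.cong) (simp_all add: moment_ff[OF assms])
  finally show ?thesis .
qed

definition SS :: "nat \<Rightarrow> real \<Rightarrow> real" where
  "SS N w = (\<Sum>i\<le>N. (-1)^i * real (N choose i) / (w + real i))"

lemma SS_rec: "w > 0 \<Longrightarrow> SS (Suc N) w = SS N w - SS N (w+1)"
proof -
  assume w: "w > 0"
  have aux: "(\<Sum>i\<le>N. (-1)^i * real (N choose Suc i) / (w + real (Suc i))) = 1/w - SS N w"
  proof -
    have "SS N w = (\<Sum>j\<le>Suc N. (-1)^j * real (N choose j) / (w + real j))"
      unfolding SS_def by (simp add: sum.atMost_Suc)
    also have "\<dots> = 1/w - (\<Sum>i\<le>N. (-1)^i * real (N choose Suc i) / (w + real (Suc i)))"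
      by (subst sum.atMost_Suc_shift) (simp add: sum_negf[symmetric])
    finally show ?thesis by simp
  qed
  have "SS (Suc N) w = 1/w + (\<Sum>i\<le>N. (-1)^Suc i * real (Suc N choose Suc i) / (w + real (Suc i)))"
    unfolding SS_def by (subst sum.atMost_Suc_shift) simp
  also have "(\<Sum>i\<le>N. (-1)^Suc i * real (Suc N choose Suc i) / (w + real (Suc i)))
     = - (\<Sum>i\<le>N. (-1)^i * real (N choose i) / ((w + 1) + real i))
       - (\<Sum>i\<le>N. (-1)^i * real (N choose Suc i) / (w + real (Suc i)))"
    unfolding sum_negf[symmetric] sum_subtractf[symmetric]
    by (rule sum.cong) (simp_all add: add_divide_distrib diff_divide_distrib algebra_simps)
  finally show ?thesis unfolding aux SS_def by simp
qed

lemma SS_closed: "w > 0 \<Longrightarrow> SS N w = fact N / pochhammer w (Suc N)"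
proof (induction N arbitrary: w)
  case 0 then show ?case by (simp add: SS_def)
next
  case (Suc N)
  define P where "P = pochhammer (w+1) N"
  have P: "P > 0" unfolding P_def using Suc.prems by (intro pochhammer_pos) simp
  have p1: "pochhammer w (Suc N) = w * P" unfolding P_def by (simp add: pochhammer_rec)
  have p2: "pochhammer (w+1) (Suc N) = P * (w + 1 + real N)" unfolding P_def by (simp add: pochhammer_Suc)
  have p3: "pochhammer w (Suc (Suc N)) = w * (P * (w + 1 + real N))"
    by (simp only: pochhammer_rec[of w "Suc N"] p2)
  have w1: "w + 1 > 0" using Suc.prems by simp
  define Q where "Q = w + 1 + real N"
  have Q: "Q > 0" unfolding Q_def using Suc.prems by simp
  have "fact N/(w*P) - fact N/(P*Q) = fact N*(Q - w)/(w*(P*Q))"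
    using Suc.prems P Q by (simp add: field_simps)
  also have "fact N*(Q - w) = fact (Suc N)" unfolding Q_def by (simp add: algebra_simps)
  finally have e: "fact N/(w*P) - fact N/(P*Q) = fact (Suc N)/(w*(P*Q))" .
  show ?case
    unfolding SS_rec[OF Suc.prems] Suc.IH[OF Suc.prems] Suc.IH[OF w1] p1 p2 p3 Q_def[symmetric] e ..
qed

lemma inv_gch:
  assumes "x \<ge> 0" "m \<ge> 1"
  shows "1 / ((real m + x) gchoose m) = (\<Sum>l=1..m. (-1)^(l-1) * real (m choose l) * (real l / (x + real l)))"
proof -
  have shift: "(\<Sum>l=1..m. (-1)^(l-1) * real (m choose l) * (real l / (x + real l)))
      = - (\<Sum>l\<le>m. (-1)^l * real (m choose l) * (real l / (x + real l)))"
  proof -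
    have "(\<Sum>l\<le>m. (-1)^l * real (m choose l) * (real l / (x + real l)))
       = (\<Sum>l=1..m. (-1)^l * real (m choose l) * (real l / (x + real l)))"
      by (rule sum.mono_neutral_right) auto
    also have "\<dots> = - (\<Sum>l=1..m. (-1)^(l-1) * real (m choose l) * (real l / (x + real l)))"
      unfolding sum_negf[symmetric] by (rule sum.cong) (auto simp: power_eq_if)
    finally show ?thesis by simp
  qed
  have alt: "(\<Sum>l\<le>m. (-1)^l * real (m choose l)) = 0"
    using choose_alternating_sum[of m, where 'a=real] assms by simp
  show ?thesis
  proof (cases "x = 0")
    case True
    have "(\<Sum>l\<le>m. (-1)^l * real (m choose l) * (real l / (x + real l))) = (\<Sum>l\<le>m. (-1)^l * real (m choose l)) - 1"
    proof -
      have "(\<Sum>l\<le>m. (-1)^l * real (m choose l) * (real l / (x + real l))) = (\<Sum>l\<le>m. (-1)^l * real (m choose l) - (if l = 0 then 1 else 0))"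
        by (rule sum.cong) (auto simp: True)
      also have "\<dots> = (\<Sum>l\<le>m. (-1)^l * real (m choose l)) - 1"
        by (simp add: sum_subtractf)
      finally show ?thesis .
    qed
    then show ?thesis unfolding shift using alt True gch_0[of m] by simp
  next
    case False
    then have x: "x > 0" using assms by simp
    have "(\<Sum>l\<le>m. (-1)^l * real (m choose l) * (real l / (x + real l)))
        = (\<Sum>l\<le>m. (-1)^l * real (m choose l)) - x * SS m x"
      unfolding SS_def sum_distrib_left sum_subtractf[symmetric]
      by (rule sum.cong) (use x in \<open>simp_all add: field_simps add_pos_nonneg\<close>)
    also have "\<dots> = - (x * (fact m / (x * pochhammer (x+1) m)))"
      unfolding alt SS_closed[OF x] by (simp add: pochhammer_rec)
    also have "\<dots> = - (1 / ((real m + x) gchoose m))"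
      using x by (simp add: gch_poch)
    finally show ?thesis unfolding shift by simp
  qed
qed



lemma beta_sum:
  assumes v: "v > 0" and kn: "k \<le> n"
  shows "(\<Sum>j=k..n. (-1)^(j-k) * (real (n choose j) * real (j choose k)) * (v/(real j + v)))
       = ((real k - 1 + v) gchoose k) / ((real n + v) gchoose n)"
proof -
  have "(\<Sum>j=k..n. (-1)^(j-k) * (real (n choose j) * real (j choose k)) * (v/(real j + v)))
      = (\<Sum>i=0..n-k. (-1)^i * (real (n choose (i+k)) * real ((i+k) choose k)) * (v/(real (i+k) + v)))"
    using sum.shift_bounds_cl_nat_ivl[of "\<lambda>j. (-1)^(j-k) * (real (n choose j) * real (j choose k)) * (v/(real j + v))" 0 k "n-k"] kn
    by simp
  also have "\<dots> = real (n choose k) * v * SS (n-k) (real k + v)"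
    unfolding SS_def sum_distrib_left atLeast0AtMost
    by (rule sum.cong) (use kn in \<open>auto simp: choose_mult[of k "_+k" n] of_nat_mult[symmetric] algebra_simps simp del: of_nat_mult\<close>)
  also have "\<dots> = real (n choose k) * v * (fact (n-k) / pochhammer (real k + v) (Suc (n-k)))"
    using v by (subst SS_closed) auto
  finally have L: "(\<Sum>j=k..n. (-1)^(j-k) * (real (n choose j) * real (j choose k)) * (v/(real j + v)))
      = real (n choose k) * v * (fact (n-k) / pochhammer (real k + v) (Suc (n-k)))" .
  define A1 where "A1 = pochhammer v k"
  define A2 where "A2 = pochhammer (real k + v) (Suc (n-k))"
  have A1: "A1 > 0" unfolding A1_def using v by (rule pochhammer_pos)
  have A2: "A2 > 0" unfolding A2_def using v by (intro pochhammer_pos) simp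
  have g1: "(real k - 1 + v) gchoose k = A1 / fact k"
    unfolding A1_def by (subst gbinomial_pochhammer') (simp add: algebra_simps)
  have pp: "v * pochhammer (v+1) n = A1 * A2"
  proof -
    have "v * pochhammer (v+1) n = pochhammer v (Suc n)" by (simp add: pochhammer_rec)
    also have "\<dots> = A1 * pochhammer (v + real k) (Suc n - k)"
      unfolding A1_def using kn by (intro pochhammer_product) simp
    also have "Suc n - k = Suc (n-k)" using kn by simp
    finally show ?thesis unfolding A2_def by (simp add: add.commute)
  qed
  have g2: "(real n + v) gchoose n = A1 * A2 / v / fact n"
    unfolding gch_poch pp[symmetric] using v by simp
  have bf: "real (n choose k) = fact n / (fact k * fact (n-k))"
    using binomial_fact[OF kn, where 'a=real] by simp
  show ?thesis
    unfolding L g1 g2 bf A2_def[symmetric]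
    using A1 A2 v by (simp add: field_simps)
qed

lemma F1_eq_F2:
  fixes a d n m k :: nat
  assumes a: "a \<ge> 1" and d: "d \<ge> 1" and m: "m \<ge> 1" and kn: "k \<le> n"
  shows "(\<Sum>l=k..n. (-1)^(l-k) * (real (n choose l) * real (l choose k)) / ((real m + real l * real a / real d) gchoose m))
    = (\<Sum>l = 1..m. (-1) ^ (l - 1) * (real (m choose l)
           * ((real k - 1 + real l * real d / real a) gchoose k))
           / ((real n + real l * real d / real a) gchoose n))"
proof -
  let ?T = "\<lambda>j. (-1::real)^(j-k) * (real (n choose j) * real (j choose k))"
  have fr: "real l / (real j * real a / real d + real l) = (real l * real d / real a) / (real j + real l * real d / real a)"
    if "l \<ge> 1" for l j
    using a d that by (simp add: field_simps)
  have "(\<Sum>l=k..n. (-1)^(l-k) * (real (n choose l) * real (l choose k)) / ((real m + real l * real a / real d) gchoose m))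
     = (\<Sum>j=k..n. ?T j * (\<Sum>l=1..m. (-1)^(l-1) * real (m choose l) * (real l / (real j * real a / real d + real l))))"
  proof (rule sum.cong[OF refl])
    fix j
    have h: "1/((real m + real j * real a / real d) gchoose m) = (\<Sum>l=1..m. (-1)^(l-1) * real (m choose l) * (real l / (real j * real a / real d + real l)))"
      using m by (intro inv_gch) simp_all
    show "(-1)^(j-k) * (real (n choose j) * real (j choose k)) / ((real m + real j * real a / real d) gchoose m)
      = ?T j * (\<Sum>l=1..m. (-1)^(l-1) * real (m choose l) * (real l / (real j * real a / real d + real l)))"
      unfolding h[symmetric] by simp
  qed
  also have "\<dots> = (\<Sum>l=1..m. (-1)^(l-1) * real (m choose l) *
        (\<Sum>j=k..n. ?T j * ((real l * real d / real a) / (real j + real l * real d / real a))))"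
    unfolding sum_distrib_left
    by (subst sum.swap) (rule sum.cong[OF refl], rule sum.cong[OF refl], simp add: fr)
  also have "\<dots> = (\<Sum>l = 1..m. (-1) ^ (l - 1) * (real (m choose l)
           * ((real k - 1 + real l * real d / real a) gchoose k))
           / ((real n + real l * real d / real a) gchoose n))"
  proof (rule sum.cong[OF refl])
    fix l assume l: "l \<in> {1..m}"
    have v: "real l * real d / real a > 0" using l a d by simp
    show "(-1)^(l-1) * real (m choose l) *
        (\<Sum>j=k..n. ?T j * ((real l * real d / real a) / (real j + real l * real d / real a)))
      = (-1) ^ (l - 1) * (real (m choose l)
           * ((real k - 1 + real l * real d / real a) gchoose k))
           / ((real n + real l * real d / real a) gchoose n)"
      unfolding beta_sum[OF v kn] by simp
  qed
  finally show ?thesis .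
qed


theorem corollary1:
  fixes a d n m :: nat
  assumes "a \<ge> 1" and "d \<ge> 1" and "n \<ge> 1" and "m \<ge> 1"
  shows "(\<forall>k \<le> n.
      pmf (urn a d n m) (a * k) =
        (\<Sum>l = 1..m. (-1) ^ (l - 1) * (real (m choose l)
           * ((real k - 1 + real l * real d / real a) gchoose k))
           / ((real n + real l * real d / real a) gchoose n))
    \<and> pmf (urn a d n m) (a * k) =
        (\<Sum>l = k..n. (-1) ^ (l - k) * (real (n choose l) * real (l choose k))
           / ((real m + real l * real a / real d) gchoose m))) \<and>
    (\<forall>s \<ge> 1.
      measure_pmf.expectation (urn a d n m) (\<lambda>y. falling_fact (real y / real a) s) =
        falling_fact (real n) s / ((real m + real a * real s / real d) gchoose m)
    \<and> measure_pmf.expectation (urn a d n m) (\<lambda>y. (real y / real a) ^ s) =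
        (\<Sum>j = 0..s. real (Stirling s j) * falling_fact (real n) j
           / ((real m + real a * real j / real d) gchoose m)))"
  proof -
  have a: "a \<ge> 1" and d: "d \<ge> 1" and m: "m \<ge> 1" using assms by auto
  show ?thesis
  proof (intro conjI allI impI)
    fix k assume k: "k \<le> n"
    show "pmf (urn a d n m) (a * k) =
        (\<Sum>l = k..n. (-1) ^ (l - k) * (real (n choose l) * real (l choose k))
           / ((real m + real l * real a / real d) gchoose m))"
      by (rule F2[OF a d])
    then show "pmf (urn a d n m) (a * k) =
        (\<Sum>l = 1..m. (-1) ^ (l - 1) * (real (m choose l)
           * ((real k - 1 + real l * real d / real a) gchoose k))
           / ((real n + real l * real d / real a) gchoose n))"
      using F1_eq_F2[OF a d m k] by simp
  next
    fix s :: nat assume "s \<ge> 1"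
    show "measure_pmf.expectation (urn a d n m) (\<lambda>y. falling_fact (real y / real a) s) =
        falling_fact (real n) s / ((real m + real a * real s / real d) gchoose m)"
      by (rule moment_ff[OF a d])
    show "measure_pmf.expectation (urn a d n m) (\<lambda>y. (real y / real a) ^ s) =
        (\<Sum>j = 0..s. real (Stirling s j) * falling_fact (real n) j
           / ((real m + real a * real j / real d) gchoose m))"
      by (rule moment_pow[OF a d])
  qed
qed

end
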